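(* Let $\Lambda$ be a tree with distinguished root vertex $\lambda$, and let $r\ge 3$ be an integer. If $2\le\deg(\lambda)\le r-1$ and all other vertices of $\Lambda$ have degree at least $3$, then there is a perimeter $P$ of radius at most $r$ and a function $d:P\to\mathbb{N}^+$ satisfying $d(p)\le\deg(p)-1$ for all $p\in P$ and $\sum_{p\in P}d(p)=r$.
   Context: On the vertex set of a rooted tree $(\Lambda,\lambda)$ define the partial order $u\prec v$ iff the unique shortest path from $\lambda$ to $v$ passes through $u$. A finite set $P\subseteq V(\Lambda)$ is a perimeter if $P\ne\{\lambda\}$ and: (i) there is a constant $R$ such that every vertex $u$ with $d(u,\lambda)\ge R$ has some $p\in P$ with $p\prec u$; (ii) if $p,p'\in P$ and $p\prec p'$ then $p=p'$. The radius of $P$ is the smallest $R$ satisfying (i). Here $d$ denotes the path-length metric and $\mathbb{N}^+$ the positive integers. *)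

theory Defs
  imports Main "HOL-Library.Extended_Nat"
begin

definition walk :: "'a set \<Rightarrow> ('a \<Rightarrow> 'a \<Rightarrow> bool) \<Rightarrow> 'a list \<Rightarrow> bool" where
  "walk V E xs \<longleftrightarrow> xs \<noteq> [] \<and> set xs \<subseteq> V \<and> successively E xs"

definition is_cycle :: "'a set \<Rightarrow> ('a \<Rightarrow> 'a \<Rightarrow> bool) \<Rightarrow> 'a list \<Rightarrow> bool" where
  "is_cycle V E xs \<longleftrightarrow> walk V E xs \<and> distinct xs \<and> length xs \<ge> 3 \<and> E (last xs) (hd xs)"

definition is_tree :: "'a set \<Rightarrow> ('a \<Rightarrow> 'a \<Rightarrow> bool) \<Rightarrow> bool" where
  "is_tree V E \<longleftrightarrow> V \<noteq> {}
     \<and> (\<forall>u v. E u v \<longrightarrow> u \<in> V \<and> v \<in> V)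
     \<and> (\<forall>u v. E u v \<longrightarrow> E v u)
     \<and> (\<forall>u. \<not> E u u)
     \<and> (\<forall>u\<in>V. \<forall>v\<in>V. \<exists>xs. walk V E xs \<and> hd xs = u \<and> last xs = v)
     \<and> (\<forall>xs. \<not> is_cycle V E xs)"

definition gdist :: "'a set \<Rightarrow> ('a \<Rightarrow> 'a \<Rightarrow> bool) \<Rightarrow> 'a \<Rightarrow> 'a \<Rightarrow> nat" where
  "gdist V E u v = (LEAST n. \<exists>xs. walk V E xs \<and> hd xs = u \<and> last xs = v \<and> length xs = Suc n)"

definition degree :: "'a set \<Rightarrow> ('a \<Rightarrow> 'a \<Rightarrow> bool) \<Rightarrow> 'a \<Rightarrow> enat" where
  "degree V E v = (if finite {u\<in>V. E v u} then enat (card {u\<in>V. E v u}) else \<infinity>)"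

definition tree_prec :: "'a set \<Rightarrow> ('a \<Rightarrow> 'a \<Rightarrow> bool) \<Rightarrow> 'a \<Rightarrow> 'a \<Rightarrow> 'a \<Rightarrow> bool" where
  "tree_prec V E rt u v \<longleftrightarrow>
     (\<exists>xs. walk V E xs \<and> hd xs = rt \<and> last xs = v
        \<and> length xs = Suc (gdist V E rt v) \<and> u \<in> set xs)"

definition covers :: "'a set \<Rightarrow> ('a \<Rightarrow> 'a \<Rightarrow> bool) \<Rightarrow> 'a \<Rightarrow> 'a set \<Rightarrow> nat \<Rightarrow> bool" where
  "covers V E rt P R \<longleftrightarrow>
     (\<forall>u\<in>V. gdist V E u rt \<ge> R \<longrightarrow> (\<exists>p\<in>P. tree_prec V E rt p u))"

definition perimeter :: "'a set \<Rightarrow> ('a \<Rightarrow> 'a \<Rightarrow> bool) \<Rightarrow> 'a \<Rightarrow> 'a set \<Rightarrow> bool" where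
  "perimeter V E rt P \<longleftrightarrow> finite P \<and> P \<subseteq> V \<and> P \<noteq> {rt}
     \<and> (\<exists>R. covers V E rt P R)
     \<and> (\<forall>p\<in>P. \<forall>p'\<in>P. tree_prec V E rt p p' \<longrightarrow> p = p')"

definition perimeter_radius :: "'a set \<Rightarrow> ('a \<Rightarrow> 'a \<Rightarrow> bool) \<Rightarrow> 'a \<Rightarrow> 'a set \<Rightarrow> nat" where
  "perimeter_radius V E rt P = (LEAST R. covers V E rt P R)"

end

theory Submission imports Defs begin

lemma succ_take: "successively P xs \<Longrightarrow> successively P (take n xs)"
  by (metis append_take_drop_id successively_append_iff)
lemma succ_drop: "successively P xs \<Longrightarrow> successively P (drop n xs)"
  by (metis append_take_drop_id successively_append_iff)

locale tr =
  fixes V :: "'a set" and E :: "'a \<Rightarrow> 'a \<Rightarrow> bool"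
  assumes T: "is_tree V E"
begin

lemma EV: "E u v \<Longrightarrow> u \<in> V \<and> v \<in> V" using T unfolding is_tree_def by blast
lemma Esym: "E u v \<Longrightarrow> E v u" using T unfolding is_tree_def by blast
lemma Eirr: "\<not> E u u" using T unfolding is_tree_def by blast
lemma conn: "u \<in> V \<Longrightarrow> v \<in> V \<Longrightarrow> \<exists>xs. walk V E xs \<and> hd xs = u \<and> last xs = v"
  using T unfolding is_tree_def by blast
lemma nocyc: "\<not> is_cycle V E xs" using T unfolding is_tree_def by blast

lemma walk_take: "walk V E xs \<Longrightarrow> n > 0 \<Longrightarrow> walk V E (take n xs)"
  unfolding walk_def using succ_take[of E xs n] set_take_subset[of n xs] by auto
lemma walk_drop: "walk V E xs \<Longrightarrow> n < length xs \<Longrightarrow> walk V E (drop n xs)"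
  unfolding walk_def using succ_drop[of E xs n] set_drop_subset[of n xs] by auto
lemma walk_rev: "walk V E xs \<Longrightarrow> walk V E (rev xs)"
proof -
  assume w: "walk V E xs"
  have "successively (\<lambda>x y. E y x) xs"
    using successively_mono[of E xs "\<lambda>x y. E y x"] Esym w unfolding walk_def by blast
  then show ?thesis using w unfolding walk_def by simp
qed
lemma walk_app: "walk V E xs \<Longrightarrow> walk V E ys \<Longrightarrow> E (last xs) (hd ys) \<Longrightarrow> walk V E (xs @ ys)"
  unfolding walk_def by (auto simp: successively_append_iff)
lemma walk_join: "walk V E xs \<Longrightarrow> walk V E ys \<Longrightarrow> last xs = hd ys \<Longrightarrow> walk V E (xs @ tl ys)"
  unfolding walk_def apply (cases ys) apply (auto simp: successively_append_iff successively_Cons)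
  done

lemma gdist_ex: assumes "u \<in> V" "v \<in> V"
  shows "\<exists>xs. walk V E xs \<and> hd xs = u \<and> last xs = v \<and> length xs = Suc (gdist V E u v)"
proof -
  obtain xs where "walk V E xs \<and> hd xs = u \<and> last xs = v" using conn assms by blast
  then have "\<exists>n. \<exists>xs. walk V E xs \<and> hd xs = u \<and> last xs = v \<and> length xs = Suc n"
    unfolding walk_def by (metis Suc_pred length_greater_0_conv)
  then show ?thesis unfolding gdist_def by (rule LeastI_ex)
qed

lemma gdist_le: "walk V E xs \<Longrightarrow> hd xs = u \<Longrightarrow> last xs = v \<Longrightarrow> length xs = Suc n \<Longrightarrow> gdist V E u v \<le> n"
  unfolding gdist_def by (rule Least_le) blast

lemma gdist_sym: assumes "u \<in> V" "v \<in> V" shows "gdist V E u v = gdist V E v u"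
proof -
  have A: "gdist V E a b \<le> gdist V E b a" if a: "a \<in> V" and b: "b \<in> V" for a b
  proof -
    obtain xs where "walk V E xs \<and> hd xs = b \<and> last xs = a \<and> length xs = Suc (gdist V E b a)"
      using gdist_ex[OF b a] by blast
    then show ?thesis using walk_rev[of xs] gdist_le[of "rev xs" a b]
      by (simp add: hd_rev last_rev)
  qed
  show ?thesis using A assms by (simp add: le_antisym)
qed

definition sp where "sp u v xs \<longleftrightarrow> walk V E xs \<and> hd xs = u \<and> last xs = v \<and> length xs = Suc (gdist V E u v)"

lemma last_join: "ys \<noteq> [] \<Longrightarrow> zs \<noteq> [] \<Longrightarrow> last ys = hd zs \<Longrightarrow> last (ys @ tl zs) = last zs"
  by (cases zs) auto
lemma hd_join: "ys \<noteq> [] \<Longrightarrow> hd (ys @ tl zs) = hd ys" by simp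

lemma last_take_Suc: "i < length xs \<Longrightarrow> last (take (Suc i) xs) = xs ! i"
  by (metis take_hd_drop hd_drop_conv_nth last_snoc)

lemma sp_ex: "u \<in> V \<Longrightarrow> v \<in> V \<Longrightarrow> \<exists>xs. sp u v xs"
  unfolding sp_def using gdist_ex by blast

lemma sp_distinct: assumes "sp u v xs" shows "distinct xs"
proof (rule ccontr)
  assume "\<not> distinct xs"
  then obtain i k where ik: "i < k" "k < length xs" "xs ! i = xs ! k"
    by (metis distinct_conv_nth linorder_neqE_nat)
  have w: "walk V E xs" and ne: "xs \<noteq> []" using assms unfolding sp_def walk_def by auto
  define ys where "ys = take (Suc i) xs @ tl (drop k xs)"
  have t1: "walk V E (take (Suc i) xs)" using walk_take[OF w] by simp
  have t2: "walk V E (drop k xs)" using walk_drop[OF w ik(2)] .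
  have lt: "last (take (Suc i) xs) = xs ! i" using ik by (simp add: last_take_Suc)
  have hdd: "hd (drop k xs) = xs ! k" using ik by (simp add: hd_drop_conv_nth)
  have "walk V E ys" unfolding ys_def using walk_join[OF t1 t2] lt hdd ik by simp
  moreover have "hd ys = u" using assms ne unfolding ys_def sp_def by (simp add: hd_take)
  moreover have "last ys = v"
    using last_join[of "take (Suc i) xs" "drop k xs"] lt hdd ik assms ne unfolding ys_def sp_def
    by (simp add: last_drop)
  moreover have "length ys = Suc (i + (length xs - Suc k))" unfolding ys_def using ik by simp
  ultimately have "gdist V E u v \<le> i + (length xs - Suc k)" by (rule gdist_le)
  then show False using assms ik unfolding sp_def by simp
qed

lemma sp_prefix: assumes "sp u v xs" "i < length xs"
  shows "gdist V E u (xs ! i) = i \<and> sp u (xs ! i) (take (Suc i) xs)"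
proof -
  have w: "walk V E xs" and ne: "xs \<noteq> []" using assms unfolding sp_def walk_def by auto
  have t1: "walk V E (take (Suc i) xs)" using walk_take[OF w] by simp
  have lt: "last (take (Suc i) xs) = xs ! i" using assms by (simp add: last_take_Suc)
  have hu: "hd (take (Suc i) xs) = u" using assms ne unfolding sp_def by (simp add: hd_take)
  have le: "gdist V E u (xs ! i) \<le> i"
    using gdist_le[OF t1 hu lt] assms by simp
  have ge: "\<not> gdist V E u (xs ! i) < i"
  proof
    assume m: "gdist V E u (xs ! i) < i"
    have "u \<in> V" "xs ! i \<in> V" using w assms ne unfolding walk_def sp_def
      by (auto simp: hd_in_set)
    then obtain ys where ys: "sp u (xs ! i) ys" using sp_ex by blast
    have wy: "walk V E ys" and ney: "ys \<noteq> []" using ys unfolding sp_def walk_def by auto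
    have t2: "walk V E (drop i xs)" using walk_drop[OF w assms(2)] .
    have hdd: "hd (drop i xs) = xs ! i" using assms by (simp add: hd_drop_conv_nth)
    have "walk V E (ys @ tl (drop i xs))" using walk_join[OF wy t2] hdd ys unfolding sp_def by simp
    moreover have "hd (ys @ tl (drop i xs)) = u" using ys ney unfolding sp_def by simp
    moreover have "last (ys @ tl (drop i xs)) = v"
      using last_join[of ys "drop i xs"] hdd ys ney assms unfolding sp_def by (simp add: last_drop)
    moreover have "length (ys @ tl (drop i xs)) = Suc (gdist V E u (xs ! i) + (length xs - Suc i))"
      using ys assms unfolding sp_def by simp
    ultimately have "gdist V E u v \<le> gdist V E u (xs ! i) + (length xs - Suc i)" by (rule gdist_le)
    then show False using assms m unfolding sp_def by simp
  qed
  have "gdist V E u (xs ! i) = i" using le ge by simp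
  then show ?thesis using t1 hu lt assms unfolding sp_def by simp
qed


lemma cyc_contra: assumes "walk V E c" "distinct c" "length c \<ge> 3" "E (last c) (hd c)" shows False
  using nocyc[of c] assms unfolding is_cycle_def by simp

lemma walk_Cons: "walk V E (a # l) \<Longrightarrow> l \<noteq> [] \<Longrightarrow> walk V E l \<and> E a (hd l)"
  unfolding walk_def by (cases l) auto

lemma path_unique:
  "walk V E xs \<Longrightarrow> distinct xs \<Longrightarrow> walk V E ys \<Longrightarrow> distinct ys \<Longrightarrow> hd xs = hd ys
   \<Longrightarrow> last xs = last ys \<Longrightarrow> xs = ys"
proof (induction xs arbitrary: ys)
  case Nil then show ?case unfolding walk_def by simp
next
  case (Cons a as)
  from Cons.prems obtain bs where ys: "ys = a # bs" unfolding walk_def by (cases ys) auto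
  show ?case
  proof (cases "as = []")
    case True
    have "last (a # bs) = a" using Cons.prems ys True by simp
    then have "bs = []" using Cons.prems(4) ys by (metis distinct.simps(2) last.simps last_in_set)
    then show ?thesis using ys True by simp
  next
    case asne: False
    show ?thesis
    proof (cases "bs = []")
      case True
      have "last (a # as) = a" using Cons.prems ys True by simp
      then have False using Cons.prems(2) asne by (metis distinct.simps(2) last.simps last_in_set)
      then show ?thesis by simp
    next
      case bsne: False
      from walk_Cons[OF Cons.prems(1) asne] have was: "walk V E as" "E a (hd as)" by auto
      from walk_Cons[OF Cons.prems(3)[unfolded ys] bsne] have wbs: "walk V E bs" "E a (hd bs)" by auto
      have la: "last as = last bs" using Cons.prems ys asne bsne by simp
      have da: "distinct as" "a \<notin> set as" and db: "distinct bs" "a \<notin> set bs"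
        using Cons.prems ys by auto
      show ?thesis
      proof (cases "hd as = hd bs")
        case True
        then have "as = bs" using Cons.IH[OF was(1) da(1) wbs(1) db(1) True la] by simp
        then show ?thesis using ys by simp
      next
        case hne: False
        define k0 where "k0 = (LEAST k. k < length bs \<and> bs ! k \<in> set as)"
        have ex: "length bs - 1 < length bs \<and> bs ! (length bs - 1) \<in> set as"
        proof -
          have "bs ! (length bs - 1) = last bs" using bsne by (simp add: last_conv_nth)
          then show ?thesis using bsne asne la last_in_set by (metis diff_less length_greater_0_conv zero_less_one)
        qed
        have k0: "k0 < length bs" "bs ! k0 \<in> set as" using LeastI[of "\<lambda>k. k < length bs \<and> bs ! k \<in> set as", OF ex] unfolding k0_def by blast+
        have kmin: "bs ! j \<notin> set as" if "j < k0" for j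
          using not_less_Least[of j "\<lambda>k. k < length bs \<and> bs ! k \<in> set as"] that k0(1)
          unfolding k0_def by (meson order.strict_trans)
        obtain i where i: "i < length as" "as ! i = bs ! k0" using k0(2) by (metis in_set_conv_nth)
        define W1 where "W1 = [a] @ take (Suc i) as"
        define c where "c = W1 @ rev (take k0 bs)"
        have aV: "a \<in> V" using Cons.prems unfolding walk_def by auto
        have wW1: "walk V E W1" unfolding W1_def
          apply (rule walk_app) using aV was walk_take[OF was(1), of "Suc i"] asne
          by (auto simp: walk_def)
        have lW1: "last W1 = as ! i" unfolding W1_def using i(1) last_take_Suc[OF i(1)] by auto
        have wc: "walk V E c"
        proof (cases "k0 = 0")
          case True then show ?thesis using wW1 unfolding c_def by simp
        next
          case False
          have w2: "walk V E (rev (take k0 bs))" using walk_rev walk_take[OF wbs(1)] False by simp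
          obtain m where m: "k0 = Suc m" using False not0_implies_Suc by blast
          have "hd (rev (take k0 bs)) = bs ! m"
            using k0 m last_take_Suc[of m bs] by (simp add: hd_rev)
          moreover have "E (bs ! m) (bs ! k0)"
            using successively_nth[of E bs m] wbs(1) m k0 unfolding walk_def by simp
          ultimately show ?thesis unfolding c_def
            using walk_app[OF wW1 w2] lW1 i Esym by simp
        qed
        have disj: "x \<notin> set as" if x: "x \<in> set (take k0 bs)" for x
        proof -
          obtain j where j: "j < length (take k0 bs)" "take k0 bs ! j = x"
            using x by (auto simp: in_set_conv_nth)
          then have "j < k0" "bs ! j = x" by auto
          then show ?thesis using kmin by blast
        qed
        have dc: "distinct c" unfolding c_def W1_def
          using da db disj by (auto dest: in_set_takeD)
        have hc: "hd c = a" unfolding c_def W1_def by simp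
        have lc: "last c = hd bs"
        proof (cases "k0 = 0")
          case True then show ?thesis unfolding c_def using lW1 i bsne by (simp add: hd_conv_nth)
        next
          case False then show ?thesis unfolding c_def using bsne by (simp add: last_rev hd_take)
        qed
        have "length c \<ge> 3"
        proof (cases "k0 = 0")
          case True
          then have "i \<noteq> 0" using i hne asne bsne by (metis hd_conv_nth)
          then show ?thesis unfolding c_def W1_def using i by simp
        next
          case False then show ?thesis unfolding c_def W1_def using i k0(1) by simp
        qed
        then show ?thesis using cyc_contra[OF wc dc] hc lc wbs(2) Esym by simp
      qed
    qed
  qed
qed


lemma walk_hd_V: "walk V E xs \<Longrightarrow> hd xs \<in> V" unfolding walk_def by (auto simp: hd_in_set)
lemma walk_nth_V: "walk V E xs \<Longrightarrow> i < length xs \<Longrightarrow> xs ! i \<in> V" unfolding walk_def by auto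

lemma sp_props: "sp u v xs \<Longrightarrow> walk V E xs \<and> distinct xs \<and> hd xs = u \<and> last xs = v \<and> length xs = Suc (gdist V E u v)"
  using sp_distinct unfolding sp_def by blast

lemma sp_last: "sp u v xs \<Longrightarrow> xs ! gdist V E u v = v"
  unfolding sp_def by (metis diff_Suc_1 last_conv_nth list.size(3) nat.distinct(1))

lemma child:
  assumes sp: "sp rt p xs" and gp: "gdist V E rt p = Suc m" and Epq: "E p q" and qn: "q \<noteq> xs ! m"
  shows "gdist V E rt q = Suc (Suc m)"
proof -
  from sp_props[OF sp] have w: "walk V E xs" and d: "distinct xs" and h: "hd xs = rt"
    and l: "last xs = p" and len: "length xs = Suc (Suc m)" using gp by auto
  have xsp: "xs ! Suc m = p" using sp_last[OF sp] gp by simp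
  have qV: "q \<in> V" using EV Epq by blast
  have pV: "p \<in> V" using EV Epq by blast
  have qnot: "q \<notin> set xs"
  proof
    assume "q \<in> set xs"
    then obtain i where i: "i < length xs" "xs ! i = q" by (auto simp: in_set_conv_nth)
    have "i \<noteq> Suc m" using i xsp Epq Eirr by auto
    then have im: "i < m" using i qn len by (metis less_Suc_eq)
    have "walk V E (drop i xs)" using walk_drop[OF w i(1)] .
    moreover have "distinct (drop i xs)" using d by simp
    moreover have "length (drop i xs) \<ge> 3" using len im by simp
    moreover have "E (last (drop i xs)) (hd (drop i xs))"
      using i l Epq by (simp add: hd_drop_conv_nth)
    ultimately show False by (rule cyc_contra)
  qed
  have wq: "walk V E [q]" using qV by (simp add: walk_def)
  have w2: "walk V E (xs @ [q])" using walk_app[OF w wq] l Epq by simp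
  have d2: "distinct (xs @ [q])" using d qnot by simp
  obtain ys where ys: "sp rt q ys" using sp_ex qV w h walk_hd_V by blast
  from sp_props[OF ys] have "ys = xs @ [q]"
    using path_unique[of ys "xs @ [q]"] w2 d2 h w unfolding walk_def by auto
  then show ?thesis using sp_props[OF ys] len by simp
qed

lemma not_in_sp: assumes "sp rt p xs" "gdist V E rt q > gdist V E rt p" shows "q \<notin> set xs"
proof
  assume "q \<in> set xs"
  then obtain i where i: "i < length xs" "xs ! i = q" by (auto simp: in_set_conv_nth)
  then have "gdist V E rt q = i" using sp_prefix[OF assms(1) i(1)] by simp
  then show False using i assms sp_props[OF assms(1)] by simp
qed

lemma par_unique:
  assumes rtV: "rt \<in> V" and "gdist V E rt q = Suc j" "gdist V E rt p1 = j" "gdist V E rt p2 = j" "E p1 q" "E p2 q"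
  shows "p1 = p2"
proof -
  have V: "p1 \<in> V" "p2 \<in> V" "q \<in> V" using EV assms by blast+
  obtain xs1 where s1: "sp rt p1 xs1" using sp_ex rtV V by blast
  obtain xs2 where s2: "sp rt p2 xs2" using sp_ex rtV V by blast
  have n1: "q \<notin> set xs1" using not_in_sp[OF s1] assms by simp
  have n2: "q \<notin> set xs2" using not_in_sp[OF s2] assms by simp
  have wq: "walk V E [q]" using V by (simp add: walk_def)
  have w1: "walk V E (xs1 @ [q])" using walk_app[OF _ wq, of xs1] sp_props[OF s1] assms by auto
  have w2: "walk V E (xs2 @ [q])" using walk_app[OF _ wq, of xs2] sp_props[OF s2] assms by auto
  have "xs1 @ [q] = xs2 @ [q]"
    apply (rule path_unique[OF w1 _ w2])
    using sp_props[OF s1] sp_props[OF s2] n1 n2 by (auto simp: walk_def)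
  then show ?thesis using sp_props[OF s1] sp_props[OF s2] by auto
qed


definition S where "S rt j = {v\<in>V. gdist V E rt v = j}"
definition N where "N v = {u\<in>V. E v u}"

lemma gdist0: assumes "rt \<in> V" "v \<in> V" shows "gdist V E rt v = 0 \<longleftrightarrow> v = rt"
proof
  assume g: "gdist V E rt v = 0"
  obtain xs where "sp rt v xs" using sp_ex assms by blast
  then show "v = rt" using sp_props g by (metis One_nat_def last_ConsL length_0_conv length_Suc_conv list.sel(1))
next
  assume "v = rt"
  then have "walk V E [rt]" using assms by (simp add: walk_def)
  then show "gdist V E rt v = 0" using gdist_le[of "[rt]" rt v 0] \<open>v = rt\<close> by simp
qed

lemma S1: assumes "rt \<in> V" shows "S rt 1 = N rt"
proof
  show "S rt 1 \<subseteq> N rt"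
  proof
    fix v assume "v \<in> S rt 1"
    then have vV: "v \<in> V" and g: "gdist V E rt v = 1" unfolding S_def by auto
    obtain xs where xs: "sp rt v xs" using sp_ex assms vV by blast
    have "E (xs ! 0) (xs ! Suc 0)" using successively_nth[of E xs 0] sp_props[OF xs] g
      unfolding walk_def by simp
    moreover have "xs ! 0 = rt" using sp_props[OF xs] by (metis hd_conv_nth list.size(3) nat.distinct(1))
    moreover have "xs ! Suc 0 = v" using sp_last[OF xs] g by simp
    ultimately show "v \<in> N rt" using vV unfolding N_def by simp
  qed
next
  show "N rt \<subseteq> S rt 1"
  proof
    fix v assume "v \<in> N rt"
    then have vV: "v \<in> V" and e: "E rt v" unfolding N_def by auto
    have "walk V E [rt, v]" using assms vV e by (simp add: walk_def)
    then have "gdist V E rt v \<le> 1" using gdist_le[of "[rt, v]" rt v 1] by simp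
    moreover have "v \<noteq> rt" using e Eirr by auto
    ultimately have "gdist V E rt v = 1" using gdist0[OF assms vV] by simp
    then show "v \<in> S rt 1" using vV unfolding S_def by simp
  qed
qed

lemma par_ex: assumes "rt \<in> V" "q \<in> V" "gdist V E rt q = Suc j"
  shows "\<exists>p. p \<in> V \<and> gdist V E rt p = j \<and> E p q"
proof -
  obtain ys where ys: "sp rt q ys" using sp_ex assms by blast
  have len: "length ys = Suc (Suc j)" using sp_props[OF ys] assms by simp
  have "gdist V E rt (ys ! j) = j" using sp_prefix[OF ys] len by simp
  moreover have "E (ys ! j) (ys ! Suc j)" using successively_nth[of E ys j] sp_props[OF ys] len
    unfolding walk_def by simp
  moreover have "ys ! Suc j = q" using sp_last[OF ys] assms by simp
  moreover have "ys ! j \<in> V" using walk_nth_V sp_props[OF ys] len by simp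
  ultimately show ?thesis by metis
qed

lemma parent: assumes "rt \<in> V" "p \<in> V" "gdist V E rt p = Suc m"
  shows "\<exists>x. x \<in> N p \<and> gdist V E rt x = m \<and> (\<forall>q. E p q \<and> q \<noteq> x \<longrightarrow> gdist V E rt q = Suc (Suc m))"
proof -
  obtain xs where xs: "sp rt p xs" using sp_ex assms by blast
  have len: "length xs = Suc (Suc m)" using sp_props[OF xs] assms by simp
  have "gdist V E rt (xs ! m) = m" using sp_prefix[OF xs] len by simp
  moreover have "E (xs ! m) (xs ! Suc m)" using successively_nth[of E xs m] sp_props[OF xs] len
    unfolding walk_def by simp
  moreover have "xs ! Suc m = p" using sp_last[OF xs] assms by simp
  moreover have "xs ! m \<in> V" using walk_nth_V sp_props[OF xs] len by simp
  ultimately show ?thesis using child[OF xs assms(3)] Esym unfolding N_def by blast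
qed

lemma deg3: assumes "3 \<le> degree V E v" shows "infinite (N v - {x}) \<or> 2 \<le> card (N v - {x})"
proof (cases "finite (N v)")
  case True
  then have "3 \<le> card (N v)" using assms unfolding degree_def N_def by (simp add: one_eSuc eSuc_enat numeral_eq_enat)
  then show ?thesis by (auto simp: card_Diff_singleton_if)
qed (simp)

lemma growth:
  assumes rtV: "rt \<in> V" and j: "j \<ge> 1" and fin: "finite (S rt j)"
    and deg: "\<forall>p\<in>S rt j. 3 \<le> degree V E p"
  shows "infinite (S rt (Suc j)) \<or> 2 * card (S rt j) \<le> card (S rt (Suc j))"
proof -
  define C where "C p = {q \<in> N p. gdist V E rt q = Suc j}" for p
  have CS: "C p \<subseteq> S rt (Suc j)" for p unfolding C_def N_def S_def by auto
  have Cbig: "infinite (C p) \<or> 2 \<le> card (C p)" if p: "p \<in> S rt j" for p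
  proof -
    obtain m where m: "j = Suc m" using j by (cases j) auto
    have pV: "p \<in> V" and gp: "gdist V E rt p = Suc m" using p m unfolding S_def by auto
    obtain x where x: "\<forall>q. E p q \<and> q \<noteq> x \<longrightarrow> gdist V E rt q = Suc (Suc m)"
      using parent[OF rtV pV gp] by blast
    have sub: "N p - {x} \<subseteq> C p" using x m unfolding C_def N_def by auto
    have "infinite (N p - {x}) \<or> 2 \<le> card (N p - {x})" using deg3 deg p by blast
    then show ?thesis
    proof
      assume "infinite (N p - {x})" then show ?thesis using sub finite_subset by blast
    next
      assume a: "2 \<le> card (N p - {x})"
      show ?thesis
      proof (cases "finite (C p)")
        case True then show ?thesis using card_mono[OF True sub] a by simp
      qed simp
    qed
  qed
  show ?thesis
  proof (cases "finite (S rt (Suc j))")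
    case False then show ?thesis by simp
  next
    case finS: True
    have finC: "finite (C p)" for p using finite_subset[OF CS finS] .
    have disj: "\<forall>p1\<in>S rt j. \<forall>p2\<in>S rt j. p1 \<noteq> p2 \<longrightarrow> C p1 \<inter> C p2 = {}"
    proof (intro ballI impI)
      fix p1 p2 assume a: "p1 \<in> S rt j" "p2 \<in> S rt j" "p1 \<noteq> p2"
      show "C p1 \<inter> C p2 = {}"
      proof (rule ccontr)
        assume "C p1 \<inter> C p2 \<noteq> {}"
        then obtain q where "q \<in> C p1" "q \<in> C p2" by blast
        then have "gdist V E rt q = Suc j" "E p1 q" "E p2 q" unfolding C_def N_def by auto
        moreover have "gdist V E rt p1 = j" "gdist V E rt p2 = j" using a unfolding S_def by auto
        ultimately have "p1 = p2" using par_unique[OF rtV, of q j p1 p2] by simp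
        then show False using a by simp
      qed
    qed
    have "card (\<Union>p\<in>S rt j. C p) = (\<Sum>p\<in>S rt j. card (C p))"
      by (rule card_UN_disjoint[OF fin]) (use finC disj in auto)
    moreover have "(\<Sum>p\<in>S rt j. card (C p)) \<ge> (\<Sum>p\<in>S rt j. 2)"
      by (rule sum_mono) (use Cbig finC in blast)
    moreover have "card (\<Union>p\<in>S rt j. C p) \<le> card (S rt (Suc j))"
      by (rule card_mono[OF finS]) (use CS in blast)
    ultimately show ?thesis by (simp add: mult.commute)
  qed
qed


lemma pow:
  assumes rtV: "rt \<in> V" and N2: "2 \<le> card (N rt)" and deg: "\<forall>v\<in>V. v \<noteq> rt \<longrightarrow> 3 \<le> degree V E v"
  shows "(\<forall>k. 1 \<le> k \<and> k \<le> n \<longrightarrow> finite (S rt k) \<and> card (S rt k) \<le> r) \<Longrightarrow> 1 \<le> n \<Longrightarrow> 2 ^ n \<le> card (S rt n)"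
proof (induction n)
  case 0 then show ?case by simp
next
  case (Suc n)
  show ?case
  proof (cases "n = 0")
    case True then show ?thesis using S1[OF rtV] N2 by simp
  next
    case False
    then have n1: "1 \<le> n" by simp
    have IH: "2 ^ n \<le> card (S rt n)" using Suc.IH Suc.prems n1 by simp
    have fin: "finite (S rt n)" using Suc.prems n1 by simp
    have finS: "finite (S rt (Suc n))" using Suc.prems by simp
    have "\<forall>p\<in>S rt n. 3 \<le> degree V E p"
    proof
      fix p assume p: "p \<in> S rt n"
      then have pV: "p \<in> V" and gp: "gdist V E rt p = n" unfolding S_def by auto
      have "gdist V E rt p \<noteq> 0" using gp n1 by simp
      then have "p \<noteq> rt" using gdist0[OF rtV pV] by simp
      then show "3 \<le> degree V E p" using deg \<open>p \<in> V\<close> by blast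
    qed
    then have "2 * card (S rt n) \<le> card (S rt (Suc n))" using growth[OF rtV n1 fin] finS by blast
    then show ?thesis using IH by simp
  qed
qed

end

lemma extend:
  assumes "finite G" "G \<subseteq> A" "card G \<le> r" "infinite A \<or> r < card A"
  shows "\<exists>F. G \<subseteq> F \<and> F \<subseteq> A \<and> finite F \<and> card F = r"
proof -
  have "\<exists>H. H \<subseteq> A - G \<and> finite H \<and> card H = r - card G"
  proof (cases "finite A")
    case False
    then have "infinite (A - G)" using assms(1) by simp
    then show ?thesis using infinite_arbitrarily_large[of "A - G" "r - card G"] by blast
  next
    case True
    have "r < card A" using assms(4) True by simp
    then have "r - card G \<le> card A - card G" by (rule diff_le_mono[OF less_imp_le])
    then have "r - card G \<le> card (A - G)" using card_Diff_subset[OF assms(1,2)] by simp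
    then obtain H where "H \<subseteq> A - G" "card H = r - card G" "finite H" by (rule obtain_subset_with_card_n)
    then show ?thesis by blast
  qed
  then obtain H where H: "H \<subseteq> A - G" "finite H" "card H = r - card G" by blast
  have "card (G \<union> H) = card G + card H" using H assms(1) by (intro card_Un_disjoint) auto
  then show ?thesis using H assms by (intro exI[of _ "G \<union> H"]) auto
qed


context tr begin

lemma main:
  assumes rtV: "rt \<in> V" and r3: "r \<ge> 3"
    and d2: "2 \<le> degree V E rt" and dr: "degree V E rt \<le> enat (r - 1)"
    and deg: "\<forall>v\<in>V. v \<noteq> rt \<longrightarrow> degree V E v \<ge> 3"
  shows "\<exists>P d. perimeter V E rt P \<and> perimeter_radius V E rt P \<le> r
           \<and> (\<forall>p\<in>P. 0 < d p \<and> enat (d p) \<le> degree V E p - 1)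
           \<and> (\<Sum>p\<in>P. d p) = r"
proof -
  have finN: "finite (N rt)" using dr unfolding degree_def N_def by (auto split: if_splits)
  then have degN: "degree V E rt = enat (card (N rt))" unfolding degree_def N_def by simp
  have N2: "2 \<le> card (N rt)" using d2 degN by (simp add: numeral_eq_enat)
  have Nr: "card (N rt) \<le> r - 1" using dr degN by simp
  define g where "g k \<longleftrightarrow> finite (S rt k) \<and> card (S rt k) \<le> r" for k
  have g1: "g 1" unfolding g_def using S1[OF rtV] finN Nr by simp
  have exn: "\<exists>k. 1 \<le> k \<and> \<not> g k"
  proof (rule ccontr)
    assume na: "\<not> ?thesis"
    then have "\<forall>k. 1 \<le> k \<and> k \<le> r \<longrightarrow> finite (S rt k) \<and> card (S rt k) \<le> r" unfolding g_def by blast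
    then have "2 ^ r \<le> card (S rt r)" using pow[OF rtV N2 deg, where n=r and r=r] r3 by simp
    moreover have "card (S rt r) \<le> r" using na r3 unfolding g_def by auto
    moreover have "r < 2 ^ r" by (rule less_exp)
    ultimately show False by simp
  qed
  define m where "m = (LEAST k. 1 \<le> k \<and> \<not> g k)"
  have m: "1 \<le> m" "\<not> g m" using LeastI_ex[OF exn] unfolding m_def by blast+
  have mlt: "g k" if "1 \<le> k" "k < m" for k
    using not_less_Least[of k "\<lambda>k. 1 \<le> k \<and> \<not> g k"] that unfolding m_def by blast
  have "m \<noteq> 1" using m g1 by auto
  then obtain j where mj: "m = Suc j" and j1: "1 \<le> j" using m(1) by (cases m) auto
  have gall: "\<forall>k. 1 \<le> k \<and> k \<le> j \<longrightarrow> finite (S rt k) \<and> card (S rt k) \<le> r"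
    using mlt mj unfolding g_def by auto
  have gj: "finite (S rt j)" "card (S rt j) \<le> r" using gall j1 by auto
  have "2 ^ j \<le> card (S rt j)" using pow[OF rtV N2 deg gall j1] .
  moreover have "j < 2 ^ j" by (rule less_exp)
  ultimately have jr: "j \<le> r" using gj by linarith
  have big: "infinite (S rt (Suc j)) \<or> r < card (S rt (Suc j))" using m(2) mj unfolding g_def by auto
  define P where "P = S rt j"
  obtain j0 where j0: "j = Suc j0" using j1 by (cases j) auto
  have pinfo: "\<exists>x. x \<in> N p \<and> gdist V E rt x = j0 \<and> (\<exists>q. E p q \<and> gdist V E rt q = Suc j \<and> q \<in> V)"
    if p: "p \<in> P" for p
  proof -
    have pV: "p \<in> V" and gp: "gdist V E rt p = Suc j0" using p j0 unfolding P_def S_def by auto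
    obtain x where x: "x \<in> N p" "gdist V E rt x = j0"
      and ch: "\<forall>q. E p q \<and> q \<noteq> x \<longrightarrow> gdist V E rt q = Suc (Suc j0)"
      using parent[OF rtV pV gp] by blast
    have "p \<noteq> rt" using gdist0[OF rtV pV] gp by simp
    then have "3 \<le> degree V E p" using deg pV by blast
    then have dd: "infinite (N p - {x}) \<or> 2 \<le> card (N p - {x})" by (rule deg3)
    have "N p - {x} \<noteq> {}"
    proof
      assume e: "N p - {x} = {}"
      show False using dd unfolding e by simp
    qed
    then obtain q where "q \<in> N p" "q \<noteq> x" by blast
    then show ?thesis using x ch j0 unfolding N_def by auto
  qed
  define f where "f p = (SOME q. E p q \<and> gdist V E rt q = Suc j \<and> q \<in> V)" for p
  have f: "E p (f p) \<and> gdist V E rt (f p) = Suc j \<and> f p \<in> V" if "p \<in> P" for p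
    using pinfo[OF that] unfolding f_def by (metis (mono_tags, lifting) someI_ex)
  have finP: "finite P" using gj P_def by simp
  have GS: "f ` P \<subseteq> S rt (Suc j)" using f unfolding S_def by auto
  have cG: "card (f ` P) \<le> r" using card_image_le[OF finP, of f] gj unfolding P_def by linarith
  obtain F where F: "f ` P \<subseteq> F" "F \<subseteq> S rt (Suc j)" "finite F" "card F = r"
    using extend[OF finite_imageI[OF finP] GS cG big] by blast
  define d where "d p = card {q \<in> F. E p q}" for p
  have PV: "P \<subseteq> V" unfolding P_def S_def by auto
  have rtP: "rt \<notin> P" using gdist0[OF rtV rtV] j1 unfolding P_def S_def by auto
  have cov: "covers V E rt P j"
    unfolding covers_def
  proof (intro ballI impI)
    fix u assume uV: "u \<in> V" and gu: "j \<le> gdist V E u rt"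
    then have gu': "j \<le> gdist V E rt u" using gdist_sym[OF uV rtV] by simp
    obtain xs where xs: "sp rt u xs" using sp_ex[OF rtV uV] by blast
    have jl: "j < length xs" using sp_props[OF xs] gu' by simp
    have "gdist V E rt (xs ! j) = j" using sp_prefix[OF xs jl] by simp
    moreover have "xs ! j \<in> V" using walk_nth_V sp_props[OF xs] jl by blast
    moreover have "tree_prec V E rt (xs ! j) u"
      unfolding tree_prec_def using sp_props[OF xs] jl by (metis nth_mem)
    ultimately show "\<exists>p\<in>P. tree_prec V E rt p u" unfolding P_def S_def by blast
  qed
  have anti: "\<forall>p\<in>P. \<forall>p'\<in>P. tree_prec V E rt p p' \<longrightarrow> p = p'"
  proof (intro ballI impI)
    fix p p' assume p: "p \<in> P" and p': "p' \<in> P" and tp: "tree_prec V E rt p p'"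
    then obtain xs where xs: "walk V E xs" "hd xs = rt" "last xs = p'"
      "length xs = Suc (gdist V E rt p')" "p \<in> set xs" unfolding tree_prec_def by blast
    have s: "sp rt p' xs" using xs unfolding sp_def by blast
    obtain i where i: "i < length xs" "xs ! i = p" using xs(5) by (auto simp: in_set_conv_nth)
    have "gdist V E rt p = i" using sp_prefix[OF s i(1)] i by simp
    then have "i = j" using p unfolding P_def S_def by simp
    moreover have "gdist V E rt p' = j" using p' unfolding P_def S_def by simp
    ultimately show "p = p'" using sp_last[OF s] i by simp
  qed
  have perim: "perimeter V E rt P"
    unfolding perimeter_def using finP PV rtP cov anti by blast
  have rad: "perimeter_radius V E rt P \<le> r"
    unfolding perimeter_radius_def using Least_le[of "covers V E rt P" j, OF cov] jr by simp
  have dpos: "0 < d p \<and> enat (d p) \<le> degree V E p - 1" if p: "p \<in> P" for p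
  proof -
    have "f p \<in> {q \<in> F. E p q}" using f[OF p] F(1) p by auto
    then have pos: "0 < d p" unfolding d_def using F(3) by (metis (no_types, lifting) card_gt_0_iff empty_iff finite_subset mem_Collect_eq subsetI)
    obtain x where x: "x \<in> N p" "gdist V E rt x = j0" using pinfo[OF p] by blast
    have le: "enat (d p) \<le> degree V E p - 1"
    proof (cases "finite (N p)")
      case False then show ?thesis unfolding degree_def N_def by simp
    next
      case True
      have "{q \<in> F. E p q} \<subseteq> N p - {x}"
        using F(2) x(2) j0 unfolding N_def S_def by auto
      then have "d p \<le> card (N p - {x})" unfolding d_def using True by (simp add: card_mono)
      also have "\<dots> = card (N p) - 1" using x(1) True by simp
      finally have "d p \<le> card (N p) - 1" .
      then show ?thesis using True unfolding degree_def N_def by (simp add: one_enat_def)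
    qed
    show ?thesis using pos le by simp
  qed
  have Fun: "F = (\<Union>p\<in>P. {q \<in> F. E p q})"
  proof
    show "F \<subseteq> (\<Union>p\<in>P. {q \<in> F. E p q})"
    proof
      fix q assume q: "q \<in> F"
      then have qV: "q \<in> V" and gq: "gdist V E rt q = Suc j" using F(2) unfolding S_def by auto
      obtain p where "p \<in> V" "gdist V E rt p = j" "E p q" using par_ex[OF rtV qV gq] by blast
      then show "q \<in> (\<Union>p\<in>P. {q \<in> F. E p q})" using q unfolding P_def S_def by auto
    qed
  qed auto
  have disj: "\<forall>p1\<in>P. \<forall>p2\<in>P. p1 \<noteq> p2 \<longrightarrow> {q \<in> F. E p1 q} \<inter> {q \<in> F. E p2 q} = {}"
  proof (intro ballI impI)
    fix p1 p2 assume a: "p1 \<in> P" "p2 \<in> P" "p1 \<noteq> p2"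
    show "{q \<in> F. E p1 q} \<inter> {q \<in> F. E p2 q} = {}"
    proof (rule ccontr)
      assume "{q \<in> F. E p1 q} \<inter> {q \<in> F. E p2 q} \<noteq> {}"
      then obtain q where q: "q \<in> F" "E p1 q" "E p2 q" by blast
      have "gdist V E rt q = Suc j" using q F(2) unfolding S_def by auto
      moreover have "gdist V E rt p1 = j" "gdist V E rt p2 = j" using a unfolding P_def S_def by auto
      ultimately have "p1 = p2" using par_unique[OF rtV, of q j p1 p2] q by simp
      then show False using a by simp
    qed
  qed
  have "card F = (\<Sum>p\<in>P. card {q \<in> F. E p q})"
    by (subst Fun, rule card_UN_disjoint[OF finP]) (use F(3) disj in auto)
  then have sum: "(\<Sum>p\<in>P. d p) = r" using F(4) unfolding d_def by simp
  show ?thesis using perim rad dpos sum by blast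
qed

end


theorem lemma5p4:
  fixes V :: "'a set" and E :: "'a \<Rightarrow> 'a \<Rightarrow> bool" and rt :: 'a and r :: nat
  assumes "is_tree V E" and "rt \<in> V" and "r \<ge> 3"
    and "2 \<le> degree V E rt" and "degree V E rt \<le> enat (r - 1)"
    and "\<forall>v\<in>V. v \<noteq> rt \<longrightarrow> degree V E v \<ge> 3"
  shows "\<exists>P d. perimeter V E rt P \<and> perimeter_radius V E rt P \<le> r
           \<and> (\<forall>p\<in>P. 0 < d p \<and> enat (d p) \<le> degree V E p - 1)
           \<and> (\<Sum>p\<in>P. d p) = r"
  by (rule tr.main[OF tr.intro[OF assms(1)] assms(2-6)])

end
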